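(* Every graph of pathwidth at most $1$ and order $n$ has at most $2^{n/2}$ independent dominating sets (equivalently, maximal independent sets). The bound is attained by the path on $2$ vertices.
   Context: An independent dominating set of $G=(V,E)$ is a set $D\subseteq V$ with no edge inside $D$ such that every vertex outside $D$ has at least one neighbour in $D$; i.e. a $(\{0\},\mathbb{N}^+)$-dominating set. Order = number of vertices; pathwidth is the standard notion. *)

theory Defs
  imports Complex_Main
begin

definition simple_graph :: "'a set \<Rightarrow> 'a set set \<Rightarrow> bool" where
  "simple_graph V E \<longleftrightarrow> finite V \<and>
     (\<forall>e\<in>E. \<exists>u v. e = {u, v} \<and> u \<noteq> v \<and> u \<in> V \<and> v \<in> V)"

definition path_decomposition :: "'a set \<Rightarrow> 'a set set \<Rightarrow> 'a set list \<Rightarrow> bool" where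
  "path_decomposition V E bs \<longleftrightarrow>
     (\<forall>i<length bs. bs ! i \<subseteq> V) \<and>
     (\<forall>v\<in>V. \<exists>i<length bs. v \<in> bs ! i) \<and>
     (\<forall>e\<in>E. \<exists>i<length bs. e \<subseteq> bs ! i) \<and>
     (\<forall>v i j k. i \<le> j \<and> j \<le> k \<and> k < length bs \<and> v \<in> bs ! i \<and> v \<in> bs ! k
        \<longrightarrow> v \<in> bs ! j)"

definition pd_width :: "'a set list \<Rightarrow> nat" where
  "pd_width bs = (if bs = [] then 0 else Max (card ` set bs) - 1)"

definition pathwidth :: "'a set \<Rightarrow> 'a set set \<Rightarrow> nat" where
  "pathwidth V E = (LEAST k. \<exists>bs. path_decomposition V E bs \<and> pd_width bs = k)"

definition indep_dominating :: "'a set \<Rightarrow> 'a set set \<Rightarrow> 'a set \<Rightarrow> bool" where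
  "indep_dominating V E D \<longleftrightarrow> D \<subseteq> V \<and>
     (\<forall>u\<in>D. \<forall>v\<in>D. {u, v} \<notin> E) \<and>
     (\<forall>v\<in>V - D. \<exists>u\<in>D. {u, v} \<in> E)"

end

theory Submission
  imports Defs
begin

definition nbr :: "'a set set \<Rightarrow> 'a \<Rightarrow> 'a set" where
  "nbr E x = {w. {x, w} \<in> E}"

definition pw1 :: "'a set \<Rightarrow> 'a set set \<Rightarrow> bool" where
  "pw1 V E \<longleftrightarrow> simple_graph V E \<and>
     (\<exists>bs. path_decomposition V E bs \<and> (\<forall>B\<in>set bs. card B \<le> 2))"

lemma ids_finite:
  assumes "simple_graph V E"
  shows "finite {D. indep_dominating V E D}"
proof -
  have "{D. indep_dominating V E D} \<subseteq> Pow V" by (auto simp: indep_dominating_def)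
  moreover have "finite V" using assms by (simp add: simple_graph_def)
  ultimately show ?thesis by (meson finite_Pow_iff finite_subset)
qed

lemma sg_restrict:
  assumes "simple_graph V E" "W \<subseteq> V"
  shows "simple_graph W {e\<in>E. e \<subseteq> W}"
  unfolding simple_graph_def
proof (intro conjI ballI)
  show "finite W" using assms by (meson finite_subset simple_graph_def)
  fix e assume "e \<in> {e\<in>E. e \<subseteq> W}"
  then have "e \<in> E" "e \<subseteq> W" by auto
  then obtain u v where "e = {u, v}" "u \<noteq> v" using assms(1) by (auto simp: simple_graph_def)
  then show "\<exists>u v. e = {u, v} \<and> u \<noteq> v \<and> u \<in> W \<and> v \<in> W" using \<open>e \<subseteq> W\<close> by auto
qed

lemma pw1_restrict:
  assumes "pw1 V E" "W \<subseteq> V"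
  shows "pw1 W {e\<in>E. e \<subseteq> W}"
proof -
  from assms(1) obtain bs where sg: "simple_graph V E" and pd: "path_decomposition V E bs"
    and c: "\<forall>B\<in>set bs. card B \<le> 2" by (auto simp: pw1_def)
  have fV: "finite V" using sg by (simp add: simple_graph_def)
  have "simple_graph W {e\<in>E. e \<subseteq> W}"
    using sg assms(2) by (rule sg_restrict)
  moreover have "path_decomposition W {e\<in>E. e \<subseteq> W} (map (\<lambda>B. B \<inter> W) bs)"
  proof -
    have p2: "\<forall>v\<in>V. \<exists>i<length bs. v \<in> bs ! i"
      using pd unfolding path_decomposition_def by (elim conjE) assumption
    have p3: "\<forall>e\<in>E. \<exists>i<length bs. e \<subseteq> bs ! i"
      using pd unfolding path_decomposition_def by (elim conjE) assumption
    have p4: "\<forall>v i j k. i \<le> j \<and> j \<le> k \<and> k < length bs \<and> v \<in> bs ! i \<and> v \<in> bs ! k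
        \<longrightarrow> v \<in> bs ! j" using pd unfolding path_decomposition_def by (elim conjE) assumption
    have q2: "\<exists>i<length bs. v \<in> bs ! i \<inter> W" if "v \<in> W" for v
    proof -
      have "v \<in> V" using that assms(2) by auto
      then obtain i where "i < length bs" "v \<in> bs ! i" using bspec[OF p2] by blast
      then show ?thesis using that by (intro exI[of _ i]) simp
    qed
    have q3: "\<exists>i<length bs. e \<subseteq> bs ! i \<inter> W" if ee: "e \<in> E" "e \<subseteq> W" for e
    proof -
      obtain i where "i < length bs" "e \<subseteq> bs ! i" using bspec[OF p3 ee(1)] by blast
      then show ?thesis using that by (intro exI[of _ i]) simp
    qed
    show ?thesis unfolding path_decomposition_def
    proof (intro conjI)
      show "\<forall>i<length (map (\<lambda>B. B \<inter> W) bs). map (\<lambda>B. B \<inter> W) bs ! i \<subseteq> W" by simp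
      show "\<forall>v\<in>W. \<exists>i<length (map (\<lambda>B. B \<inter> W) bs). v \<in> map (\<lambda>B. B \<inter> W) bs ! i"
      proof
        fix v assume "v \<in> W"
        then obtain i where "i < length bs" "v \<in> bs ! i \<inter> W" using q2 by blast
        then show "\<exists>i<length (map (\<lambda>B. B \<inter> W) bs). v \<in> map (\<lambda>B. B \<inter> W) bs ! i"
          by (intro exI[of _ i]) simp
      qed
      show "\<forall>e\<in>{e \<in> E. e \<subseteq> W}. \<exists>i<length (map (\<lambda>B. B \<inter> W) bs). e \<subseteq> map (\<lambda>B. B \<inter> W) bs ! i"
      proof
        fix e assume "e \<in> {e \<in> E. e \<subseteq> W}"
        then obtain i where "i < length bs" "e \<subseteq> bs ! i \<inter> W" using q3 by blast
        then show "\<exists>i<length (map (\<lambda>B. B \<inter> W) bs). e \<subseteq> map (\<lambda>B. B \<inter> W) bs ! i"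
          by (intro exI[of _ i]) simp
      qed
      show "\<forall>v i j k. i \<le> j \<and> j \<le> k \<and> k < length (map (\<lambda>B. B \<inter> W) bs) \<and>
          v \<in> map (\<lambda>B. B \<inter> W) bs ! i \<and> v \<in> map (\<lambda>B. B \<inter> W) bs ! k \<longrightarrow> v \<in> map (\<lambda>B. B \<inter> W) bs ! j"
      proof (intro allI impI)
        fix v i j k
        assume h: "i \<le> j \<and> j \<le> k \<and> k < length (map (\<lambda>B. B \<inter> W) bs) \<and>
          v \<in> map (\<lambda>B. B \<inter> W) bs ! i \<and> v \<in> map (\<lambda>B. B \<inter> W) bs ! k"
        then have "i < length bs" "j < length bs" "k < length bs" by auto
        then have "v \<in> bs ! i" "v \<in> bs ! k" "v \<in> W" using h by auto
        then have "v \<in> bs ! j" using p4[rule_format, of i j k v] h \<open>k < length bs\<close> by blast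
        then show "v \<in> map (\<lambda>B. B \<inter> W) bs ! j" using \<open>j < length bs\<close> \<open>v \<in> W\<close> by simp
      qed
    qed
  qed
  moreover have "\<forall>B\<in>set (map (\<lambda>B. B \<inter> W) bs). card B \<le> 2"
  proof
    fix B assume "B \<in> set (map (\<lambda>B. B \<inter> W) bs)"
    then obtain B0 where B0: "B0 \<in> set bs" "B = B0 \<inter> W" by auto
    have p1: "\<forall>i<length bs. bs ! i \<subseteq> V"
      using pd unfolding path_decomposition_def by (elim conjE) assumption
    obtain i where "i < length bs" "B0 = bs ! i" using B0(1) by (auto simp: in_set_conv_nth)
    then have "B0 \<subseteq> V" using p1 by simp
    then have "finite B0" using fV by (rule finite_subset)
    then have "card B \<le> card B0" unfolding B0(2) by (intro card_mono) auto
    also have "\<dots> \<le> 2" using c B0(1) by simp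
    finally show "card B \<le> 2" .
  qed
  ultimately show ?thesis unfolding pw1_def by blast
qed

lemma contains_bound:
  fixes x :: 'a and V :: "'a set"
  assumes sg: "simple_graph V E"
  defines "W \<equiv> V - insert x (nbr E x)"
  shows "card {D. indep_dominating V E D \<and> x \<in> D}
         \<le> card {D. indep_dominating W {e\<in>E. e \<subseteq> W} D}"
proof (rule card_inj_on_le[where f = "\<lambda>D. D - {x}"])
  have "simple_graph W {e\<in>E. e \<subseteq> W}"
    using sg by (rule sg_restrict) (auto simp: W_def)
  then show "finite {D. indep_dominating W {e\<in>E. e \<subseteq> W} D}" by (rule ids_finite)
  show "inj_on (\<lambda>D. D - {x}) {D. indep_dominating V E D \<and> x \<in> D}"
    by (rule inj_onI) (metis insert_Diff mem_Collect_eq)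
  show "(\<lambda>D. D - {x}) ` {D. indep_dominating V E D \<and> x \<in> D}
        \<subseteq> {D. indep_dominating W {e\<in>E. e \<subseteq> W} D}"
  proof clarify
    fix D assume D: "indep_dominating V E D" "x \<in> D"
    have sub: "D - {x} \<subseteq> W"
    proof
      fix y assume y: "y \<in> D - {x}"
      then have "y \<notin> nbr E x" using D by (auto simp: indep_dominating_def nbr_def)
      then show "y \<in> W" using y D by (auto simp: W_def indep_dominating_def)
    qed
    have "\<forall>w\<in>W - (D - {x}). \<exists>y\<in>D - {x}. {y, w} \<in> E \<and> {y, w} \<subseteq> W"
    proof
      fix w assume w: "w \<in> W - (D - {x})"
      then have "w \<in> V - D" "w \<noteq> x" "{x, w} \<notin> E" by (auto simp: W_def nbr_def)
      then obtain y where "y \<in> D" "{y, w} \<in> E" using D unfolding indep_dominating_def by blast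
      moreover have "y \<noteq> x" using \<open>{x, w} \<notin> E\<close> calculation by auto
      ultimately show "\<exists>y\<in>D - {x}. {y, w} \<in> E \<and> {y, w} \<subseteq> W" using sub w by auto
    qed
    then show "indep_dominating W {e\<in>E. e \<subseteq> W} (D - {x})"
      using sub D unfolding indep_dominating_def by auto
  qed
qed

lemma edge_props:
  assumes "simple_graph V E" "{x, y} \<in> E"
  shows "x \<in> V \<and> y \<in> V \<and> x \<noteq> y"
proof -
  obtain u w where "{x, y} = {u, w}" "u \<noteq> w" "u \<in> V" "w \<in> V"
    using assms unfolding simple_graph_def by blast
  then show ?thesis by (auto simp: doubleton_eq_iff)
qed

lemma low_degree:
  assumes "pw1 V E" "V \<noteq> {}"
  shows "\<exists>v\<in>V. \<forall>a b. a \<in> nbr E v \<longrightarrow> b \<in> nbr E v \<longrightarrow> a = b"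
proof -
  from assms(1) obtain bs where sg: "simple_graph V E" and pd: "path_decomposition V E bs"
    and c: "\<forall>B\<in>set bs. card B \<le> 2" by (auto simp: pw1_def)
  have fV: "finite V" using sg by (simp add: simple_graph_def)
  have p1: "\<forall>i<length bs. bs ! i \<subseteq> V"
    using pd unfolding path_decomposition_def by (elim conjE) assumption
  have p2: "\<forall>v\<in>V. \<exists>i<length bs. v \<in> bs ! i"
    using pd unfolding path_decomposition_def by (elim conjE) assumption
  have p3: "\<forall>e\<in>E. \<exists>i<length bs. e \<subseteq> bs ! i"
    using pd unfolding path_decomposition_def by (elim conjE) assumption
  have p4: "\<forall>v i j k. i \<le> j \<and> j \<le> k \<and> k < length bs \<and> v \<in> bs ! i \<and> v \<in> bs ! k
        \<longrightarrow> v \<in> bs ! j" using pd unfolding path_decomposition_def by (elim conjE) assumption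
  define l where "l v = Max {i. i < length bs \<and> v \<in> bs ! i}" for v
  have fin: "finite {i. i < length bs \<and> v \<in> bs ! i}" for v
    by (rule finite_subset[of _ "{..<length bs}"]) auto
  have ne: "{i. i < length bs \<and> v \<in> bs ! i} \<noteq> {}" if "v \<in> V" for v
    using bspec[OF p2 that] by auto
  have lin: "l v < length bs \<and> v \<in> bs ! l v" if "v \<in> V" for v
    using Max_in[OF fin ne[OF that]] unfolding l_def by auto
  have lge: "j \<le> l v" if "j < length bs" "v \<in> bs ! j" for v j
    unfolding l_def using that by (intro Max_ge[OF fin]) auto
  have "Min (l ` V) \<in> l ` V" using fV assms(2) by (intro Min_in) auto
  then obtain v where v: "v \<in> V" "l v = Min (l ` V)" by (metis imageE)
  have vmin: "l v \<le> l w" if "w \<in> V" for w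
    using v fV that by simp
  have inb: "a \<in> bs ! l v \<and> a \<noteq> v" if "a \<in> nbr E v" for a
  proof -
    have e: "{v, a} \<in> E" using that by (simp add: nbr_def)
    then have aV: "a \<in> V" and av: "a \<noteq> v" using edge_props[OF sg] by blast+
    obtain j where j: "j < length bs" "{v, a} \<subseteq> bs ! j" using bspec[OF p3 e] by blast
    have "j \<le> l v" using lge j by auto
    moreover have "l v \<le> l a" using vmin aV by auto
    moreover have "l a < length bs" "a \<in> bs ! l a" using lin aV by auto
    ultimately have "a \<in> bs ! l v" using j p4[rule_format, of j "l v" "l a" a] by blast
    then show ?thesis using av by auto
  qed
  have card2: "card (bs ! l v) \<le> 2" using c lin[OF v(1)] by auto
  have "bs ! l v \<subseteq> V" using p1 lin[OF v(1)] by blast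
  then have finb: "finite (bs ! l v)" using fV by (rule finite_subset)
  show ?thesis
  proof (intro bexI[OF _ v(1)] allI impI)
    fix a b assume a: "a \<in> nbr E v" and b: "b \<in> nbr E v"
    show "a = b"
    proof (rule ccontr)
      assume "a \<noteq> b"
      then have "card {v, a, b} = 3" using inb[OF a] inb[OF b] by auto
      moreover have "{v, a, b} \<subseteq> bs ! l v" using inb[OF a] inb[OF b] lin[OF v(1)] by auto
      then have "card {v, a, b} \<le> card (bs ! l v)" by (rule card_mono[OF finb])
      ultimately show False using card2 by linarith
    qed
  qed
qed

lemma sq_bound:
  fixes x a b p q m :: nat
  assumes "x \<le> a + b" "a^2 \<le> 2^p" "b^2 \<le> 2^q" "p \<le> m" "q \<le> m"
  shows "x^2 \<le> 2^(m+2)"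
proof -
  have h: "(int a - int b)^2 \<ge> 0" by simp
  have "int (2*a*b) \<le> int (a^2+b^2)" using h by (simp add: power2_diff)
  then have ab: "2*a*b \<le> a^2+b^2" by (simp only: of_nat_le_iff)
  have "x^2 \<le> (a+b)^2" using assms(1) by (simp add: power_mono)
  also have "\<dots> = a^2 + 2*a*b + b^2" by (simp add: power2_sum)
  also have "\<dots> \<le> 2*a^2 + 2*b^2" using ab by simp
  also have "\<dots> \<le> 2*2^p + 2*2^q" using assms(2,3) by simp
  also have "\<dots> \<le> 2*2^m + 2*2^m" using assms(4,5)
    by (intro add_mono mult_left_mono power_increasing) auto
  also have "\<dots> = 2^(m+2)" by simp
  finally show ?thesis .
qed

lemma main_bound:
  assumes "pw1 V E"
  shows "(card {D. indep_dominating V E D})^2 \<le> 2^card V"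
  using assms
proof (induction "card V" arbitrary: V E rule: less_induct)
  case less
  have sg: "simple_graph V E" using less.prems by (simp add: pw1_def)
  have fV: "finite V" using sg by (simp add: simple_graph_def)
  show ?case
  proof (cases "V = {}")
    case True
    then have "{D. indep_dominating V E D} = {{}}" by (auto simp: indep_dominating_def)
    then show ?thesis using True by simp
  next
    case False
    obtain v where v: "v \<in> V" and uq: "\<forall>a b. a \<in> nbr E v \<longrightarrow> b \<in> nbr E v \<longrightarrow> a = b"
      using low_degree[OF less.prems False] by blast
    define W where "W x = V - insert x (nbr E x)" for x
    have WV: "W x \<subseteq> V" for x by (auto simp: W_def)
    have IH: "(card {D. indep_dominating (W x) {e\<in>E. e \<subseteq> W x} D})^2 \<le> 2^card (W x)"
      if "x \<in> V" for x
    proof (rule less.hyps)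
      show "card (W x) < card V" using that fV by (intro psubset_card_mono) (auto simp: W_def)
      show "pw1 (W x) {e\<in>E. e \<subseteq> W x}" using pw1_restrict[OF less.prems WV] .
    qed
    have cb: "card {D. indep_dominating V E D \<and> x \<in> D}
         \<le> card {D. indep_dominating (W x) {e\<in>E. e \<subseteq> W x} D}" for x
      unfolding W_def by (rule contains_bound[OF sg])
    have finI: "finite {D. indep_dominating V E D}" by (rule ids_finite[OF sg])
    show ?thesis
    proof (cases "nbr E v = {}")
      case True
      have allv: "v \<in> D" if D: "indep_dominating V E D" for D
      proof (rule ccontr)
        assume "v \<notin> D"
        then obtain u where "u \<in> D" "{u, v} \<in> E" using D v unfolding indep_dominating_def by blast
        then have "u \<in> nbr E v" by (simp add: nbr_def insert_commute)
        then show False using True by auto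
      qed
      have "{D. indep_dominating V E D} = {D. indep_dominating V E D \<and> v \<in> D}"
        using allv by auto
      then have "card {D. indep_dominating V E D} \<le> card {D. indep_dominating (W v) {e\<in>E. e \<subseteq> W v} D}"
        using cb by simp
      then have "(card {D. indep_dominating V E D})^2 \<le> 2^card (W v)"
        using IH[OF v] by (meson le_trans power_mono zero_le)
      also have "\<dots> \<le> 2^card V" using card_mono[OF fV WV] by (intro power_increasing) auto
      finally show ?thesis .
    next
      case False
      then obtain u where u: "u \<in> nbr E v" by auto
      have nv: "nbr E v = {u}" using u uq by auto
      have e: "{v, u} \<in> E" using u by (simp add: nbr_def)
      then have uV: "u \<in> V" and uv: "u \<noteq> v" using edge_props[OF sg] by blast+
      have vu: "v \<in> nbr E u" using e by (simp add: nbr_def insert_commute)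
      have sub: "{D. indep_dominating V E D} \<subseteq>
          {D. indep_dominating V E D \<and> v \<in> D} \<union> {D. indep_dominating V E D \<and> u \<in> D}"
      proof
        fix D assume "D \<in> {D. indep_dominating V E D}"
        then have D: "indep_dominating V E D" by simp
        have "u \<in> D" if "v \<notin> D"
        proof -
        from D that obtain w where "w \<in> D" "{w, v} \<in> E" using v unfolding indep_dominating_def by blast
        then have "w \<in> nbr E v" by (simp add: nbr_def insert_commute)
        then show "u \<in> D" using nv \<open>w \<in> D\<close> by auto
        qed
        then show "D \<in> {D. indep_dominating V E D \<and> v \<in> D} \<union> {D. indep_dominating V E D \<and> u \<in> D}"
          using D by auto
      qed
      have "card {D. indep_dominating V E D} \<le>
          card {D. indep_dominating V E D \<and> v \<in> D} + card {D. indep_dominating V E D \<and> u \<in> D}"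
        by (rule le_trans[OF card_mono[OF _ sub] card_Un_le]) (use finI in auto)
      also have "\<dots> \<le> card {D. indep_dominating (W v) {e\<in>E. e \<subseteq> W v} D}
                     + card {D. indep_dominating (W u) {e\<in>E. e \<subseteq> W u} D}"
        using cb by (intro add_mono)
      finally have xle: "card {D. indep_dominating V E D} \<le> \<dots>" .
      have c2: "card (V - {u, v}) = card V - 2" using uV v uv fV by (simp add: card_Diff_subset)
      have "card (W v) \<le> card (V - {u, v})" using u fV by (intro card_mono) (auto simp: W_def)
      then have cwv: "card (W v) \<le> card V - 2" using c2 by simp
      have "card (W u) \<le> card (V - {u, v})" using vu fV by (intro card_mono) (auto simp: W_def)
      then have cwu: "card (W u) \<le> card V - 2" using c2 by simp
      have n2: "card V - 2 + 2 = card V"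
      proof -
        have "{u, v} \<subseteq> V" using uV v by auto
        then have "card {u, v} \<le> card V" using fV by (rule card_mono[rotated])
        then show ?thesis using uv by simp
      qed
      have h: "(card {D. indep_dominating V E D})^2 \<le> 2^(card V - 2 + 2)"
        by (rule sq_bound[OF xle IH[OF v] IH[OF uV] cwv cwu])
      show ?thesis using h unfolding n2 .
    qed
  qed
qed

lemma pw_to_pw1:
  assumes sg: "simple_graph V E" and pw: "pathwidth V E \<le> 1"
  shows "pw1 V E"
proof -
  have "path_decomposition V E [V]"
    unfolding path_decomposition_def
  proof (intro conjI)
    show "\<forall>i<length [V]. [V] ! i \<subseteq> V" by simp
    show "\<forall>v\<in>V. \<exists>i<length [V]. v \<in> [V] ! i" by auto
    show "\<forall>e\<in>E. \<exists>i<length [V]. e \<subseteq> [V] ! i" using sg by (force simp: simple_graph_def)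
    show "\<forall>v i j k. i \<le> j \<and> j \<le> k \<and> k < length [V] \<and> v \<in> [V] ! i \<and> v \<in> [V] ! k
        \<longrightarrow> v \<in> [V] ! j" by auto
  qed
  then have ex: "\<exists>k bs. path_decomposition V E bs \<and> pd_width bs = k" by blast
  obtain bs where bs: "path_decomposition V E bs" "pd_width bs = pathwidth V E"
    using LeastI_ex[OF ex] unfolding pathwidth_def by blast
  have "\<forall>B\<in>set bs. card B \<le> 2"
  proof
    fix B assume B: "B \<in> set bs"
    then have ne: "bs \<noteq> []" by auto
    have "card B \<le> Max (card ` set bs)" using B by (intro Max_ge) auto
    moreover have "Max (card ` set bs) - 1 \<le> 1" using bs pw ne by (simp add: pd_width_def)
    ultimately show "card B \<le> 2" by linarith
  qed
  then show ?thesis using sg bs by (auto simp: pw1_def)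
qed

lemma real_bound:
  fixes x n :: nat
  assumes "x^2 \<le> 2^n"
  shows "real x \<le> 2 powr (real n / 2)"
proof (rule power2_le_imp_le)
  have "(2 powr (real n / 2))^2 = 2 powr (real n / 2) * 2 powr (real n / 2)"
    by (simp add: power2_eq_square)
  also have "\<dots> = 2 powr (real n)" by (simp add: powr_add[symmetric])
  also have "\<dots> = 2^n" by (simp add: powr_realpow)
  finally have eq: "(2 powr (real n / 2))^2 = 2^n" .
  have "real (x^2) \<le> real (2^n)" using assms by (simp only: of_nat_le_iff)
  then show "(real x)^2 \<le> (2 powr (real n / 2))^2" using eq by simp
  show "0 \<le> 2 powr (real n / 2)" by simp
qed

theorem mainTheorem6:
  shows "(\<forall>(V :: 'a set) E. simple_graph V E \<and> pathwidth V E \<le> 1 \<longrightarrow>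
            real (card {D. indep_dominating V E D}) \<le> 2 powr (real (card V) / 2))
       \<and> (simple_graph {0::nat, 1} {{0, 1}} \<and> pathwidth {0::nat, 1} {{0, 1}} \<le> 1 \<and>
            real (card {D. indep_dominating {0::nat, 1} {{0, 1}} D}) = 2 powr (real (card {0::nat, 1}) / 2))"
proof (intro conjI allI impI)
  fix V :: "'a set" and E
  assume "simple_graph V E \<and> pathwidth V E \<le> 1"
  then have "pw1 V E" using pw_to_pw1 by blast
  then show "real (card {D. indep_dominating V E D}) \<le> 2 powr (real (card V) / 2)"
    by (intro real_bound main_bound)
next
  show sg: "simple_graph {0::nat, 1} {{0, 1}}" by (auto simp: simple_graph_def)
next
  have "path_decomposition {0::nat, 1} {{0, 1}} [{0, 1}]"
    unfolding path_decomposition_def by auto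
  moreover have "pd_width [{0::nat, 1}] = 1" by (simp add: pd_width_def)
  ultimately show "pathwidth {0::nat, 1} {{0, 1}} \<le> 1"
    unfolding pathwidth_def by (intro Least_le) blast
next
  have "{D. indep_dominating {0::nat, 1} {{0, 1}} D} = {{0}, {1}}"
  proof (rule set_eqI, rule iffI)
    fix D assume "D \<in> {D. indep_dominating {0::nat, 1} {{0, 1}} D}"
    then have D: "indep_dominating {0::nat, 1} {{0, 1}} D" by simp
    then have "D \<in> Pow {0, 1}" by (auto simp: indep_dominating_def)
    then have "D = {} \<or> D = {0} \<or> D = {1} \<or> D = {0, 1}" by (auto simp: Pow_insert)
    then show "D \<in> {{0}, {1}}" using D by (auto simp: indep_dominating_def insert_commute)
  next
    fix D assume "D \<in> {{0::nat}, {1}}"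
    then show "D \<in> {D. indep_dominating {0::nat, 1} {{0, 1}} D}"
      by (auto simp: indep_dominating_def insert_commute)
  qed
  then show "real (card {D. indep_dominating {0::nat, 1} {{0, 1}} D}) = 2 powr (real (card {0::nat, 1}) / 2)"
    by simp
qed

end
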